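(* Let $\mathtt{X}$ and $\mathtt{Y}$ be two operations in a run $r$ of a protocol $P$. If $\mathtt{Y}$ completes in $r$ and $\mathtt{X}\not\boldsymbol{\rightsquigarrow}_r\mathtt{Y}$, then there exists a run $r'\approx r$ in which both (i) $\mathtt{Y}<_{r'}\mathtt{X}$, and (ii) $\mathtt{X}<_{r'}\mathtt{Z}$ for every operation $\mathtt{Z}$ that completes in $r$ such that $\mathtt{X}<_r\mathtt{Z}$ and $\mathtt{Z}\not\boldsymbol{\rightsquigarrow}_r\mathtt{Y}$ (here operations of $r'$ are identified with their corresponding operations of $r$).
   Context: Model: $n$ processes connected by directed FIFO channels; an environment (adversary) schedules everything. Time is identified with the natural numbers; a run $r=r(0),r(1),\dots$ is an infinite sequence of global states, $r_i(m)$ denotes process $i$'s local state at time $m$, and round $m+1$ transforms $r(m)$ into $r(m+1)$. In each round the environment chooses independently for each process $i$ one of: $\mathtt{move}_i$ ($i$ performs an action allowed by its protocol at its current local state — a local action, a message send, or a response action), $\mathtt{skip}_i$, $\mathtt{invoke}_i(x)$ ($i$ receives external input $x$), or $\mathtt{deliver}_i$ of a message from some $j$ (delivered if it is the oldest message in transit on the channel from $j$ to $i$). The local state of a process consists of its initial value and the complete ordered history of its actions, messages sent and received, and inputs. A run of protocol $P$ starts in an initial global state and every process action is allowed by $P$ at the current local state. A node is a process-time pair $\langle p,t\rangle$. Message chains: $\langle p,t\rangle\rightsquigarrow_r\langle q,t'\rangle$ holds if (1a) $p=q$ and $t<t'$, or (1b) $p$ sends a message to $q$ in round $t+1$ of $r$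 delivered no later than round $t'$, or (2) transitively via some intermediate node. Runs are locally equivalent, $r\approx r'$, if every process passes through exactly the same set of local states in both. Operations: an operation $\mathtt{X}$ of process $i$ starts with an invocation input $\mathtt{invoke}_i(\cdot)$ in round $t$ and ends with a matching response action performed by $i$ in round $t'$; write $\mathtt{X}.s=\langle i,t\rangle$, $\mathtt{X}.e=\langle i,t'\rangle$, $t_{\mathtt{X}.s}(r)=t$, $t_{\mathtt{X}.e}(r)=t'$. $\mathtt{X}$ completes in $r$ if both invocation and response occur. $\mathtt{X}<_r\mathtt{Y}$ means $t_{\mathtt{X}.e}(r)<t_{\mathtt{Y}.s}(r)$. $\mathtt{X}\boldsymbol{\rightsquigarrow}_r\mathtt{Y}$ means $\mathtt{X}.s\rightsquigarrow_r\mathtt{Y}.e$. An operation $\mathtt{X}$ of $i$ in $r$ corresponds to an operation $\mathtt{X}'$ of $i$ in $r'$ if $r_i(t_{\mathtt{X}.s}(r))=r'_i(t_{\mathtt{X}'.s}(r'))$ and $r_i(t_{\mathtt{X}.e}(r))=r'_i(t_{\mathtt{X}'.e}(r'))$. *)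

theory Defs
  imports Main
begin

datatype ('p, 'm, 'a, 'o) action =
    LocalAct 'a
  | SendAct 'p 'm
  | RespAct 'o

datatype ('p, 'm, 'a, 'o, 'x) event =
    Did "('p, 'm, 'a, 'o) action"
  | Recv 'p 'm                      (* delivery of a message from the given process *)
  | Inp 'x                          (* external input (invocation) *)

type_synonym ('v, 'p, 'm, 'a, 'o, 'x) lstate = "'v \<times> ('p, 'm, 'a, 'o, 'x) event list"

text \<open>Global state: local states of all processes (channel contents are determined
 by the histories: sent but not yet received messages, in FIFO order).\<close>
type_synonym ('v, 'p, 'm, 'a, 'o, 'x) gstate = "'p \<Rightarrow> ('v, 'p, 'm, 'a, 'o, 'x) lstate"

type_synonym ('v, 'p, 'm, 'a, 'o, 'x) run = "nat \<Rightarrow> ('v, 'p, 'm, 'a, 'o, 'x) gstate"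

type_synonym ('v, 'p, 'm, 'a, 'o, 'x) protocol =
  "'p \<Rightarrow> ('v, 'p, 'm, 'a, 'o, 'x) lstate \<Rightarrow> ('p, 'm, 'a, 'o) action set"

definition hist :: "('v, 'p, 'm, 'a, 'o, 'x) lstate \<Rightarrow> ('p, 'm, 'a, 'o, 'x) event list" where
  "hist s = snd s"

definition ext :: "('v, 'p, 'm, 'a, 'o, 'x) lstate \<Rightarrow> ('p, 'm, 'a, 'o, 'x) event \<Rightarrow> ('v, 'p, 'm, 'a, 'o, 'x) lstate" where
  "ext s e = (fst s, snd s @ [e])"

fun sent_to :: "'p \<Rightarrow> ('p, 'm, 'a, 'o, 'x) event list \<Rightarrow> 'm list" where
  "sent_to q [] = []"
| "sent_to q (Did (SendAct q' m) # es) = (if q' = q then m # sent_to q es else sent_to q es)"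
| "sent_to q (_ # es) = sent_to q es"

fun recvd_from :: "'p \<Rightarrow> ('p, 'm, 'a, 'o, 'x) event list \<Rightarrow> 'm list" where
  "recvd_from p [] = []"
| "recvd_from p (Recv p' m # es) = (if p' = p then m # recvd_from p es else recvd_from p es)"
| "recvd_from p (_ # es) = recvd_from p es"

text \<open>One process's transition in a round, as chosen by the environment:
 skip, move (an allowed action), invoke(x), or delivery of the oldest message in
 transit on the channel from some j.\<close>
definition proc_step ::
  "('v, 'p, 'm, 'a, 'o, 'x) protocol \<Rightarrow> ('v, 'p, 'm, 'a, 'o, 'x) gstate \<Rightarrow> 'p
   \<Rightarrow> ('v, 'p, 'm, 'a, 'o, 'x) lstate \<Rightarrow> bool" where
  "proc_step P g i s' \<longleftrightarrow>
     s' = g i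
   \<or> (\<exists>a \<in> P i (g i). s' = ext (g i) (Did a))
   \<or> (\<exists>x. s' = ext (g i) (Inp x))
   \<or> (\<exists>j. length (recvd_from j (hist (g i))) < length (sent_to i (hist (g j)))
          \<and> s' = ext (g i) (Recv j (sent_to i (hist (g j)) ! length (recvd_from j (hist (g i))))))"

definition round_step ::
  "('v, 'p, 'm, 'a, 'o, 'x) protocol \<Rightarrow> ('v, 'p, 'm, 'a, 'o, 'x) gstate
   \<Rightarrow> ('v, 'p, 'm, 'a, 'o, 'x) gstate \<Rightarrow> bool" where
  "round_step P g g' \<longleftrightarrow> (\<forall>i. proc_step P g i (g' i))"

definition initial :: "('v, 'p, 'm, 'a, 'o, 'x) gstate \<Rightarrow> bool" where
  "initial g \<longleftrightarrow> (\<forall>i. hist (g i) = [])"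

definition is_run :: "('v, 'p, 'm, 'a, 'o, 'x) protocol \<Rightarrow> ('v, 'p, 'm, 'a, 'o, 'x) run \<Rightarrow> bool" where
  "is_run P r \<longleftrightarrow> initial (r 0) \<and> (\<forall>m. round_step P (r m) (r (Suc m)))"

definition loc_equiv :: "('v, 'p, 'm, 'a, 'o, 'x) run \<Rightarrow> ('v, 'p, 'm, 'a, 'o, 'x) run \<Rightarrow> bool" where
  "loc_equiv r r' \<longleftrightarrow> (\<forall>i. range (\<lambda>m. r m i) = range (\<lambda>m. r' m i))"

text \<open>By FIFO the message sent in round t+1 is the k-th message from p to q,
 where k is the number of messages p sent to q up to time t.\<close>
definition sends_delivered :: "('v, 'p, 'm, 'a, 'o, 'x) run \<Rightarrow> 'p \<Rightarrow> nat \<Rightarrow> 'p \<Rightarrow> nat \<Rightarrow> bool" where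
  "sends_delivered r p t q t' \<longleftrightarrow>
     (\<exists>m. r (Suc t) p = ext (r t p) (Did (SendAct q m)))
   \<and> length (sent_to q (hist (r t p))) < length (recvd_from p (hist (r t' q)))"

inductive msg_chain :: "('v, 'p, 'm, 'a, 'o, 'x) run \<Rightarrow> 'p \<times> nat \<Rightarrow> 'p \<times> nat \<Rightarrow> bool"
  for r where
  local: "t < t' \<Longrightarrow> msg_chain r (p, t) (p, t')"
| msg: "sends_delivered r p t q t' \<Longrightarrow> msg_chain r (p, t) (q, t')"
| trans: "msg_chain r a b \<Longrightarrow> msg_chain r b c \<Longrightarrow> msg_chain r a c"

text \<open>Process i receives an input in round t (t = m+1, transforming r(m) into r(m+1)).\<close>
definition invoked_in :: "('v, 'p, 'm, 'a, 'o, 'x) run \<Rightarrow> 'p \<Rightarrow> nat \<Rightarrow> bool" where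
  "invoked_in r i t \<longleftrightarrow> (\<exists>m x. t = Suc m \<and> r (Suc m) i = ext (r m i) (Inp x))"

definition responds_in :: "('v, 'p, 'm, 'a, 'o, 'x) run \<Rightarrow> 'p \<Rightarrow> nat \<Rightarrow> bool" where
  "responds_in r i t \<longleftrightarrow> (\<exists>m v. t = Suc m \<and> r (Suc m) i = ext (r m i) (Did (RespAct v)))"

text \<open>An operation is identified by its process and its invocation round;
 its matching response is the first response action of that process after the invocation.\<close>
type_synonym 'p op = "'p \<times> nat"

definition is_op :: "('v, 'p, 'm, 'a, 'o, 'x) run \<Rightarrow> 'p op \<Rightarrow> bool" where
  "is_op r X \<longleftrightarrow> invoked_in r (fst X) (snd X)"

definition op_start :: "'p op \<Rightarrow> nat" where
  "op_start X = snd X"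

definition op_completes :: "('v, 'p, 'm, 'a, 'o, 'x) run \<Rightarrow> 'p op \<Rightarrow> bool" where
  "op_completes r X \<longleftrightarrow> is_op r X \<and> (\<exists>t. snd X < t \<and> responds_in r (fst X) t)"

definition op_end :: "('v, 'p, 'm, 'a, 'o, 'x) run \<Rightarrow> 'p op \<Rightarrow> nat" where
  "op_end r X = (LEAST t. snd X < t \<and> responds_in r (fst X) t)"

definition op_before :: "('v, 'p, 'm, 'a, 'o, 'x) run \<Rightarrow> 'p op \<Rightarrow> 'p op \<Rightarrow> bool" where
  "op_before r X Y \<longleftrightarrow> op_completes r X \<and> is_op r Y \<and> op_end r X < op_start Y"

definition op_chain :: "('v, 'p, 'm, 'a, 'o, 'x) run \<Rightarrow> 'p op \<Rightarrow> 'p op \<Rightarrow> bool" where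
  "op_chain r X Y \<longleftrightarrow> msg_chain r (fst X, op_start X) (fst Y, op_end r Y)"

definition op_corresponds ::
  "('v, 'p, 'm, 'a, 'o, 'x) run \<Rightarrow> 'p op \<Rightarrow> ('v, 'p, 'm, 'a, 'o, 'x) run \<Rightarrow> 'p op \<Rightarrow> bool" where
  "op_corresponds r X r' X' \<longleftrightarrow>
     fst X = fst X' \<and> is_op r X \<and> is_op r' X'
   \<and> r (op_start X) (fst X) = r' (op_start X') (fst X')
   \<and> (op_completes r X \<longleftrightarrow> op_completes r' X')
   \<and> (op_completes r X \<longrightarrow> r (op_end r X) (fst X) = r' (op_end r' X') (fst X'))"

end

theory Submission
  imports Defs "HOL-Library.Sublist"
begin

lemma ext_inj[simp]: "ext s e1 = ext s e2 \<longleftrightarrow> e1 = e2"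
  by (simp add: ext_def)

lemma ext_neq[simp]: "ext s e \<noteq> s" "s \<noteq> ext s e"
  by (auto simp: ext_def prod_eq_iff)

lemma fst_ext[simp]: "fst (ext s e) = fst s" and hist_ext[simp]: "hist (ext s e) = hist s @ [e]"
  by (simp_all add: ext_def hist_def)

lemma sent_to_append[simp]: "sent_to q (xs @ ys) = sent_to q xs @ sent_to q ys"
  by (induction q xs rule: sent_to.induct) auto

lemma recvd_from_append[simp]: "recvd_from q (xs @ ys) = recvd_from q xs @ recvd_from q ys"
  by (induction q xs rule: recvd_from.induct) auto

lemma recvd_from_single[simp]:
  "recvd_from p [Did a] = []" "recvd_from p [Inp x] = []"
  "recvd_from p [Recv j mm] = (if j = p then [mm] else [])"
  by auto

lemma sent_to_single[simp]:
  "sent_to p [Recv j mm] = []" "sent_to p [Inp x] = []"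
  "sent_to p [Did (SendAct q mm)] = (if q = p then [mm] else [])"
  "sent_to p [Did (LocalAct aa)] = []" "sent_to p [Did (RespAct v)] = []"
  by auto

lemma sent_to_single_nonempty:
  assumes "sent_to q [ev] \<noteq> []" shows "\<exists>mm. ev = Did (SendAct q mm)"
proof (cases ev)
  case (Did a) then show ?thesis using assms by (cases a) (auto split: if_splits)
qed (use assms in auto)

lemma sent_to_single_len: "length (sent_to q [ev]) \<le> 1"
proof (cases ev)
  case (Did a) then show ?thesis by (cases a) auto
qed auto

lemma run_step: "is_run P r \<Longrightarrow> proc_step P (r m) i (r (Suc m) i)"
  by (simp add: is_run_def round_step_def)

lemma run_ext: "is_run P r \<Longrightarrow> r (Suc m) i = r m i \<or> (\<exists>ev. r (Suc m) i = ext (r m i) ev)"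
  using run_step[of P r m i] unfolding proc_step_def by blast

lemma run_mono:
  assumes "is_run P r" "m \<le> n"
  shows "fst (r n i) = fst (r m i) \<and> prefix (hist (r m i)) (hist (r n i))"
  using assms(2)
proof (induction n)
  case 0 then show ?case by simp
next
  case (Suc n)
  show ?case
  proof (cases "m = Suc n")
    case False
    then have "m \<le> n" using Suc by simp
    with Suc.IH have ih: "fst (r n i) = fst (r m i) \<and> prefix (hist (r m i)) (hist (r n i))" by blast
    from run_ext[OF assms(1), of n i] show ?thesis
    proof
      assume "r (Suc n) i = r n i" then show ?thesis using ih by simp
    next
      assume "\<exists>ev. r (Suc n) i = ext (r n i) ev"
      then obtain ev where "r (Suc n) i = ext (r n i) ev" by blast
      then show ?thesis using ih by auto
    qed
  qed simp
qed

lemma prefix_sent_to: "prefix xs ys \<Longrightarrow> prefix (sent_to q xs) (sent_to q ys)"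
  by (auto simp: prefix_def)

lemma sent_mono:
  "is_run P r \<Longrightarrow> m \<le> n \<Longrightarrow> prefix (sent_to q (hist (r m p))) (sent_to q (hist (r n p)))"
  by (metis run_mono prefix_sent_to)

lemma sent_len_mono:
  "is_run P r \<Longrightarrow> m \<le> n \<Longrightarrow> length (sent_to q (hist (r m p))) \<le> length (sent_to q (hist (r n p)))"
  using sent_mono[of P r m n q p] prefix_length_le by blast

lemma prefix_nth: "prefix xs ys \<Longrightarrow> n < length xs \<Longrightarrow> xs ! n = ys ! n"
  by (auto simp: prefix_def nth_append)

lemma prefix_extend: "prefix xs ys \<Longrightarrow> length xs < length ys \<Longrightarrow> prefix (xs @ [ys ! length xs]) ys"
proof -
  assume a: "prefix xs ys" "length xs < length ys"
  then obtain zs where zs: "ys = xs @ zs" by (auto simp: prefix_def)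
  with a obtain z zs' where "zs = z # zs'" by (cases zs) auto
  then show ?thesis using zs by (simp add: prefix_def nth_append)
qed

lemma recv_prefix_sent:
  assumes "is_run P r"
  shows "prefix (recvd_from p (hist (r m q))) (sent_to q (hist (r m p)))"
proof (induction m)
  case 0 then show ?case using assms by (simp add: is_run_def initial_def)
next
  case (Suc m)
  have SS: "prefix (sent_to q (hist (r m p))) (sent_to q (hist (r (Suc m) p)))"
    using sent_mono[OF assms, of m "Suc m"] by simp
  have ps: "proc_step P (r m) q (r (Suc m) q)" using run_step[OF assms] .
  then consider "r (Suc m) q = r m q" | a where "r (Suc m) q = ext (r m q) (Did a)"
    | x where "r (Suc m) q = ext (r m q) (Inp x)"
    | j where "length (recvd_from j (hist (r m q))) < length (sent_to q (hist (r m j)))"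
       "r (Suc m) q = ext (r m q) (Recv j (sent_to q (hist (r m j)) ! length (recvd_from j (hist (r m q)))))"
    unfolding proc_step_def by blast
  then have "prefix (recvd_from p (hist (r (Suc m) q))) (sent_to q (hist (r m p)))"
  proof cases
    case 1 then show ?thesis using Suc.IH by simp
  next
    case 2 then show ?thesis using Suc.IH by simp
  next
    case 3 then show ?thesis using Suc.IH by simp
  next
    case (4 j)
    show ?thesis
    proof (cases "j = p")
      case True
      then show ?thesis using 4 prefix_extend[OF Suc.IH] by simp
    next
      case False
      then show ?thesis using 4 Suc.IH by simp
    qed
  qed
  then show ?case using SS by (rule prefix_order.trans)
qed

lemma chain_time:
  assumes "is_run P r"
  shows "msg_chain r a b \<Longrightarrow> snd a < snd b"
proof (induction rule: msg_chain.induct)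
  case (msg p t q t')
  then obtain K where K: "K = length (sent_to q (hist (r t p)))"
    and lt: "K < length (recvd_from p (hist (r t' q)))" by (auto simp: sends_delivered_def)
  have "length (recvd_from p (hist (r t' q))) \<le> length (sent_to q (hist (r t' p)))"
    using recv_prefix_sent[OF assms] prefix_length_le by blast
  moreover have "t' \<le> t \<Longrightarrow> length (sent_to q (hist (r t' p))) \<le> K"
    using sent_len_mono[OF assms] K by blast
  ultimately have "\<not> t' \<le> t" using lt by linarith
  then show ?case by simp
qed auto

definition one_step :: "('v, 'p, 'm, 'a, 'o, 'x) run \<Rightarrow> 'p \<times> nat \<Rightarrow> 'p \<times> nat \<Rightarrow> bool" where
  "one_step r a b \<longleftrightarrow> (fst a = fst b \<and> snd a < snd b) \<or> sends_delivered r (fst a) (snd a) (fst b) (snd b)"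

lemma one_step_chain: "one_step r a b \<Longrightarrow> msg_chain r a b"
  unfolding one_step_def by (cases a; cases b) (auto intro: msg_chain.intros)

lemma chain_first:
  "msg_chain r a c \<Longrightarrow> one_step r a c \<or> (\<exists>b. one_step r a b \<and> msg_chain r b c)"
proof (induction rule: msg_chain.induct)
  case (local t t' p) then show ?case by (simp add: one_step_def)
next
  case (msg p t q t') then show ?case by (simp add: one_step_def)
next
  case (trans a b c)
  then show ?case by (meson msg_chain.trans)
qed

lemma chain_nosend:
  assumes "msg_chain r (i, k) c"
    and "\<forall>q mm. r (Suc k) i \<noteq> ext (r k i) (Did (SendAct q mm))"
  shows "c = (i, Suc k) \<or> msg_chain r (i, Suc k) c"
proof -
  have st: "\<exists>t'. b = (i, t') \<and> k < t'" if "one_step r (i, k) b" for b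
    using that assms(2) unfolding one_step_def sends_delivered_def by (cases b) auto
  have lc: "b = (i, Suc k) \<or> msg_chain r (i, Suc k) b" if "one_step r (i, k) b" for b
  proof -
    from st[OF that] obtain t' where "b = (i, t')" "k < t'" by blast
    then show ?thesis by (cases "t' = Suc k") (auto intro: msg_chain.local)
  qed
  from chain_first[OF assms(1)] show ?thesis
  proof
    assume "one_step r (i, k) c" then show ?thesis using lc by blast
  next
    assume "\<exists>b. one_step r (i, k) b \<and> msg_chain r b c"
    then obtain b where "one_step r (i, k) b" "msg_chain r b c" by blast
    then show ?thesis using lc by (metis msg_chain.trans)
  qed
qed

lemma send_exists:
  assumes "is_run P r"
  shows "L < length (sent_to q (hist (r k p))) \<Longrightarrow>
    \<exists>s<k. length (sent_to q (hist (r s p))) = L \<and> (\<exists>mm. r (Suc s) p = ext (r s p) (Did (SendAct q mm)))"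
proof (induction k)
  case 0
  have "initial (r 0)" using assms by (simp only: is_run_def)
  then have "hist (r 0 p) = []" by (simp only: initial_def)
  then show ?case using 0 by simp
next
  case (Suc k)
  show ?case
  proof (cases "L < length (sent_to q (hist (r k p)))")
    case True then obtain s where "s<k" "length (sent_to q (hist (r s p))) = L" "\<exists>mm. r (Suc s) p = ext (r s p) (Did (SendAct q mm))" using Suc.IH by blast
    then show ?thesis by (intro exI[of _ s]) auto
  next
    case False
    from run_ext[OF assms, of k p] show ?thesis
    proof
      assume "r (Suc k) p = r k p" then show ?thesis using False Suc.prems by simp
    next
      assume "\<exists>ev. r (Suc k) p = ext (r k p) ev"
      then obtain ev where ev: "r (Suc k) p = ext (r k p) ev" by blast
      have l1: "length (sent_to q [ev]) \<le> 1" by (rule sent_to_single_len)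
      have len: "length (sent_to q (hist (r (Suc k) p))) = length (sent_to q (hist (r k p))) + length (sent_to q [ev])"
        using ev by simp
      have ne: "sent_to q [ev] \<noteq> []" using len Suc.prems False by auto
      have L: "L = length (sent_to q (hist (r k p)))" using len l1 Suc.prems False by linarith
      obtain mm where "ev = Did (SendAct q mm)"
        using sent_to_single_nonempty[OF ne] by blast
      then show ?thesis using ev L by (intro exI[of _ k]) auto
    qed
  qed
qed

definition gsch :: "nat \<Rightarrow> ('p \<Rightarrow> nat) \<Rightarrow> 'p \<Rightarrow> nat \<Rightarrow> nat" where
  "gsch T c i m = (if m \<le> T then min m (c i) else max (c i) (m - T))"

definition esch :: "nat \<Rightarrow> ('p \<Rightarrow> nat) \<Rightarrow> 'p \<Rightarrow> nat \<Rightarrow> nat" where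
  "esch T c i t = (if t \<le> c i then t else T + t)"

lemma g0: "gsch T c i 0 = 0"
  by (simp add: gsch_def)

lemma g_step: "c i \<le> T \<Longrightarrow> gsch T c i (Suc m) = gsch T c i m \<or> gsch T c i (Suc m) = Suc (gsch T c i m)"
  unfolding gsch_def by auto

lemma g_move: "c i \<le> T \<Longrightarrow> gsch T c i (Suc m) = Suc (gsch T c i m) \<Longrightarrow>
   (m < T \<and> gsch T c i m = m \<and> m < c i) \<or> (T \<le> m \<and> gsch T c i m = m - T \<and> c i \<le> m - T)"
  unfolding gsch_def by (cases "Suc m \<le> T"; cases "m \<le> T") auto

lemma g_e: "c i \<le> T \<Longrightarrow> gsch T c i (esch T c i t) = t"
  unfolding gsch_def esch_def by auto

lemma g_e_pred: "c i \<le> T \<Longrightarrow> 0 < t \<Longrightarrow> 0 < esch T c i t \<and> gsch T c i (esch T c i t - 1) = t - 1"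
  unfolding gsch_def esch_def by auto

lemma e_g: "c i \<le> T \<Longrightarrow> gsch T c i (Suc m) = Suc (gsch T c i m) \<Longrightarrow> esch T c i (Suc (gsch T c i m)) = Suc m"
  unfolding gsch_def esch_def by (cases "Suc m \<le> T"; cases "m \<le> T") auto

lemma e_mono: "c i \<le> T \<Longrightarrow> t1 < t2 \<Longrightarrow> esch T c i t1 < esch T c i t2"
  unfolding esch_def by auto

lemma e_mono_iff: "c i \<le> T \<Longrightarrow> esch T c i t1 < esch T c i t2 \<longleftrightarrow> t1 < t2"
  unfolding esch_def by auto

lemma g_surj: "c i \<le> T \<Longrightarrow> \<exists>m. gsch T c i m = k"
  by (rule exI[of _ "esch T c i k"], rule g_e)

lemma ev_fwd:
  assumes cT: "\<forall>i. c i \<le> T" and r': "\<forall>m i. r' m i = r (gsch T c i m) i"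
    and ev: "r (Suc k) i = ext (r k i) ev"
  shows "\<exists>m'. esch T c i (Suc k) = Suc m' \<and> r' (Suc m') i = ext (r' m' i) ev"
proof -
  have "0 < esch T c i (Suc k)" "gsch T c i (esch T c i (Suc k) - 1) = k"
    using g_e_pred[of c i T "Suc k"] cT by auto
  moreover have "gsch T c i (esch T c i (Suc k)) = Suc k" using g_e[of c i T] cT by simp
  ultimately show ?thesis using ev r'
    by (intro exI[of _ "esch T c i (Suc k) - 1"]) auto
qed

lemma ev_bwd:
  assumes cT: "\<forall>i. c i \<le> T" and r': "\<forall>m i. r' m i = r (gsch T c i m) i"
    and ev: "r' (Suc m) i = ext (r' m i) ev"
  shows "\<exists>k. Suc m = esch T c i (Suc k) \<and> r (Suc k) i = ext (r k i) ev"
proof -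
  have ne: "gsch T c i (Suc m) \<noteq> gsch T c i m"
  proof
    assume "gsch T c i (Suc m) = gsch T c i m"
    then have "r' (Suc m) i = r' m i" using r' by simp
    then show False using ev by simp
  qed
  then have mv: "gsch T c i (Suc m) = Suc (gsch T c i m)" using g_step[of c i T m] cT by simp
  show ?thesis
    using e_g[OF _ mv] cT ev r' mv by (intro exI[of _ "gsch T c i m"]) auto
qed

lemma invoked_fwd:
  assumes cT: "\<forall>i. c i \<le> T" and r': "\<forall>m i. r' m i = r (gsch T c i m) i"
  shows "invoked_in r i t \<Longrightarrow> invoked_in r' i (esch T c i t)"
  unfolding invoked_in_def using ev_fwd[OF cT r'] by blast

lemma responds_fwd:
  assumes cT: "\<forall>i. c i \<le> T" and r': "\<forall>m i. r' m i = r (gsch T c i m) i"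
  shows "responds_in r i t \<Longrightarrow> responds_in r' i (esch T c i t)"
  unfolding responds_in_def using ev_fwd[OF cT r'] by blast

lemma responds_bwd:
  assumes cT: "\<forall>i. c i \<le> T" and r': "\<forall>m i. r' m i = r (gsch T c i m) i"
  shows "responds_in r' i t' \<Longrightarrow> \<exists>t. t' = esch T c i t \<and> responds_in r i t"
  unfolding responds_in_def using ev_bwd[OF cT r'] by blast

lemma op_transfer:
  assumes cT: "\<forall>i. c i \<le> T" and r': "\<forall>m i. r' m i = r (gsch T c i m) i"
    and X: "is_op r X"
  shows "is_op r' (fst X, esch T c (fst X) (snd X))"
    and "op_completes r' (fst X, esch T c (fst X) (snd X)) \<longleftrightarrow> op_completes r X"
    and "op_completes r X \<Longrightarrow> op_end r' (fst X, esch T c (fst X) (snd X)) = esch T c (fst X) (op_end r X)"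
    and "op_corresponds r X r' (fst X, esch T c (fst X) (snd X))"
proof -
  obtain i t where Xe: "X = (i, t)" by (cases X)
  have ci: "c i \<le> T" using cT by blast
  show io: "is_op r' (fst X, esch T c (fst X) (snd X))"
    using X invoked_fwd[OF cT r'] by (simp add: is_op_def Xe)
  show cc: "op_completes r' (fst X, esch T c (fst X) (snd X)) \<longleftrightarrow> op_completes r X"
  proof
    assume "op_completes r' (fst X, esch T c (fst X) (snd X))"
    then obtain u where "esch T c i t < u" "responds_in r' i u" by (auto simp: op_completes_def Xe)
    then obtain u' where "u = esch T c i u'" "responds_in r i u'" using responds_bwd[OF cT r'] by blast
    then show "op_completes r X" using X \<open>esch T c i t < u\<close> e_mono_iff[of c i T, OF ci]
      by (auto simp: op_completes_def Xe)
  next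
    assume "op_completes r X"
    then obtain u where "t < u" "responds_in r i u" by (auto simp: op_completes_def Xe)
    then have "esch T c i t < esch T c i u" "responds_in r' i (esch T c i u)"
      using responds_fwd[OF cT r'] e_mono[of c i T, OF ci] by auto
    then show "op_completes r' (fst X, esch T c (fst X) (snd X))" using io
      unfolding op_completes_def Xe by auto
  qed
  have oe: "op_end r' (fst X, esch T c (fst X) (snd X)) = esch T c (fst X) (op_end r X)"
    if co: "op_completes r X"
  proof -
    obtain u where "t < u" "responds_in r i u" using co by (auto simp: op_completes_def Xe)
    then have u0: "t < op_end r X \<and> responds_in r i (op_end r X)"
      unfolding op_end_def Xe snd_conv fst_conv using LeastI[of "\<lambda>x. t < x \<and> responds_in r i x" u] by simp
    have lu: "op_end r X \<le> u" if "t < u" "responds_in r i u" for u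
      unfolding op_end_def Xe snd_conv fst_conv using that by (simp add: Least_le)
    show ?thesis unfolding Xe fst_conv snd_conv
    proof (subst op_end_def, simp, rule Least_equality)
      show "esch T c i t < esch T c i (op_end r (i, t)) \<and> responds_in r' i (esch T c i (op_end r (i, t)))"
        using u0 e_mono[of c i T, OF ci] responds_fwd[OF cT r'] by (simp add: Xe)
    next
      fix y assume "esch T c i t < y \<and> responds_in r' i y"
      then obtain u' where "y = esch T c i u'" "responds_in r i u'" "esch T c i t < y"
        using responds_bwd[OF cT r'] by blast
      then show "esch T c i (op_end r (i, t)) \<le> y" using lu[of u'] e_mono_iff[of c i T, OF ci]
        by (metis Xe linorder_not_less)
    qed
  qed
  then show "op_completes r X \<Longrightarrow> op_end r' (fst X, esch T c (fst X) (snd X)) = esch T c (fst X) (op_end r X)" .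
  show "op_corresponds r X r' (fst X, esch T c (fst X) (snd X))"
    unfolding op_corresponds_def using X io cc oe r' g_e[of c i T, OF ci] by (simp add: op_start_def Xe)
qed

theorem theorem9:
  fixes P :: "('v, 'p::finite, 'm, 'a, 'o, 'x) protocol"
    and r :: "('v, 'p, 'm, 'a, 'o, 'x) run"
    and X Y :: "'p op"
  assumes "is_run P r"
    and "is_op r X" and "is_op r Y"
    and "op_completes r Y"
    and "\<not> op_chain r X Y"
  shows "\<exists>r'. is_run P r' \<and> loc_equiv r' r \<and>
           (\<exists>X' Y'. op_corresponds r X r' X' \<and> op_corresponds r Y r' Y' \<and>
              op_before r' Y' X' \<and>
              (\<forall>Z. op_completes r Z \<and> op_before r X Z \<and> \<not> op_chain r Z Y \<longrightarrow>
                  (\<exists>Z'. op_corresponds r Z r' Z' \<and> op_before r' X' Z')))"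
proof -
  note run = assms(1)
  obtain y ty where Ye: "Y = (y, ty)" by (cases Y)
  obtain x tx where Xe: "X = (x, tx)" by (cases X)
  define T where "T = op_end r Y"
  have Y0: "ty < T \<and> responds_in r y T"
  proof -
    obtain u where "ty < u" "responds_in r y u" using assms(4) by (auto simp: op_completes_def Ye)
    then show ?thesis unfolding T_def op_end_def Ye fst_conv snd_conv
      using LeastI[of "\<lambda>x. ty < x \<and> responds_in r y x" u] by simp
  qed
  define inp where "inp i t \<longleftrightarrow> msg_chain r (i, t) (y, T)" for i t
  have inpT: "inp i t \<Longrightarrow> t < T" for i t
    using chain_time[OF run] unfolding inp_def by fastforce
  define c where "c i = (if \<exists>t. inp i t then Suc (GREATEST t. inp i t) else 0)" for i
  have c_iff: "inp i t \<longleftrightarrow> t < c i" for i t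
  proof
    assume a: "inp i t"
    then have "t \<le> (GREATEST t. inp i t)" using Greatest_le_nat[of "inp i" t T] inpT less_imp_le by blast
    then show "t < c i" using a unfolding c_def by auto
  next
    assume a: "t < c i"
    then have ex: "\<exists>t. inp i t" unfolding c_def by (auto split: if_splits)
    then obtain t0 where "inp i t0" by blast
    then have G: "inp i (GREATEST t. inp i t)" using GreatestI_nat[of "inp i" t0 T] inpT less_imp_le by blast
    have "t \<le> (GREATEST t. inp i t)" using a ex unfolding c_def by auto
    then show "inp i t"
    proof (cases "t = (GREATEST t. inp i t)")
      case True then show ?thesis using G by simp
    next
      case False
      then have "msg_chain r (i, t) (i, GREATEST t. inp i t)"
        using \<open>t \<le> _\<close> by (intro msg_chain.local) simp
      then show ?thesis using G unfolding inp_def by (blast intro: msg_chain.trans)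
    qed
  qed
  have cT: "\<forall>i. c i \<le> T"
  proof
    fix i
    show "c i \<le> T"
    proof (cases "c i = 0")
      case False
      then have "c i - 1 < c i" by simp
      then have "inp i (c i - 1)" using c_iff by blast
      then show ?thesis using inpT by fastforce
    qed simp
  qed
  have cy: "c y = T"
  proof -
    have "t < c y \<longleftrightarrow> t < T" for t
      using c_iff[of y t] inpT[of y t] unfolding inp_def by (auto intro: msg_chain.local)
    then show ?thesis by (metis linorder_neqE_nat less_irrefl)
  qed
  have nc: "c z < tz" if ch: "\<not> msg_chain r (z, tz) (y, T)" and iv: "invoked_in r z tz" for z tz
  proof (rule ccontr)
    assume "\<not> c z < tz"
    from iv obtain k xx where k: "tz = Suc k" "r (Suc k) z = ext (r k z) (Inp xx)"
      by (auto simp: invoked_in_def)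
    have "k < c z" using \<open>\<not> c z < tz\<close> k by simp
    then have "msg_chain r (z, k) (y, T)" using c_iff unfolding inp_def by blast
    moreover have "\<forall>q mm. r (Suc k) z \<noteq> ext (r k z) (Did (SendAct q mm))" using k by simp
    ultimately have "(y, T) = (z, Suc k) \<or> msg_chain r (z, Suc k) (y, T)" by (rule chain_nosend)
    then have "y = z" "T = Suc k" using ch k by auto
    moreover obtain m' v where "T = Suc m'" "r (Suc m') y = ext (r m' y) (Did (RespAct v))"
      using Y0 by (auto simp: responds_in_def)
    ultimately show False using k by simp
  qed
  define r' where "r' m i = r (gsch T c i m) i" for m i
  have r'eq: "\<forall>m i. r' m i = r (gsch T c i m) i" by (simp add: r'_def)
  have init: "initial (r 0)" using run by (simp only: is_run_def)
  have run': "is_run P r'"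
    unfolding is_run_def round_step_def
  proof (intro conjI allI)
    show "initial (r' 0)" using init unfolding initial_def r'_def g0 .
  next
    fix m i
    have ci: "c i \<le> T" using cT by blast
    define k where "k = gsch T c i m"
    have r'm: "r' m i = r k i" by (simp add: r'_def k_def)
    from g_step[of c i T m, OF ci] show "proc_step P (r' m) i (r' (Suc m) i)"
    proof
      assume "gsch T c i (Suc m) = gsch T c i m"
      then have "r' (Suc m) i = r' m i" by (simp add: r'_def)
      then show ?thesis unfolding proc_step_def by simp
    next
      assume mv: "gsch T c i (Suc m) = Suc (gsch T c i m)"
      then have r'Sm: "r' (Suc m) i = r (Suc k) i" by (simp add: r'_def k_def)
      have ps: "proc_step P (r k) i (r (Suc k) i)" using run_step[OF run] .
      then consider "r (Suc k) i = r k i" | a where "a \<in> P i (r k i)" "r (Suc k) i = ext (r k i) (Did a)"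
        | xx where "r (Suc k) i = ext (r k i) (Inp xx)"
        | j where "length (recvd_from j (hist (r k i))) < length (sent_to i (hist (r k j)))"
           "r (Suc k) i = ext (r k i) (Recv j (sent_to i (hist (r k j)) ! length (recvd_from j (hist (r k i)))))"
        unfolding proc_step_def by blast
      then show ?thesis
      proof cases
        case 1 then show ?thesis unfolding proc_step_def r'm r'Sm by simp
      next
        case 2 then show ?thesis unfolding proc_step_def r'm r'Sm by blast
      next
        case 3 then show ?thesis unfolding proc_step_def r'm r'Sm by blast
      next
        case (4 j)
        define L where "L = length (recvd_from j (hist (r k i)))"
        define S where "S = sent_to i (hist (r k j))"
        define gj where "gj = gsch T c j m"
        define S' where "S' = sent_to i (hist (r gj j))"
        have Lt: "L < length S" using 4 by (simp add: L_def S_def)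
        have ev: "r (Suc k) i = ext (r k i) (Recv j (S ! L))" using 4 by (simp add: L_def S_def)
        have r'mj: "r' m j = r gj j" by (simp add: r'_def gj_def)
        have A: "L < length S'"
        proof (cases "k \<le> gj")
          case True
          then show ?thesis using Lt sent_len_mono[OF run True, of i j] by (simp add: S_def S'_def)
        next
          case False
          from g_move[of c i T m, OF ci mv]
          have ph: "m < T \<and> k = m \<and> m < c i"
          proof
            assume "T \<le> m \<and> gsch T c i m = m - T \<and> c i \<le> m - T"
            then have "k \<le> gj" unfolding k_def gj_def gsch_def by auto
            then show ?thesis using False by simp
          qed (simp add: k_def)
          then have gjc: "gj = c j" using False unfolding gj_def gsch_def by auto
          obtain s mm where s: "s < k" "length (sent_to i (hist (r s j))) = L"
            "r (Suc s) j = ext (r s j) (Did (SendAct i mm))"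
            using send_exists[OF run Lt[unfolded S_def]] by blast
          have "sends_delivered r j s i (Suc k)"
            unfolding sends_delivered_def using s ev by (simp add: L_def)
          then have ch1: "msg_chain r (j, s) (i, Suc k)" by (rule msg_chain.msg)
          have "inp i k" using ph c_iff by blast
          then have "msg_chain r (i, k) (y, T)" by (simp add: inp_def)
          moreover have "\<forall>q mm. r (Suc k) i \<noteq> ext (r k i) (Did (SendAct q mm))" using ev by simp
          ultimately have "(y, T) = (i, Suc k) \<or> msg_chain r (i, Suc k) (y, T)" by (rule chain_nosend)
          then have "msg_chain r (j, s) (y, T)" using ch1 by (metis msg_chain.trans)
          then have "s < c j" using c_iff unfolding inp_def by blast
          then have "length (sent_to i (hist (r (Suc s) j))) \<le> length S'"
            using sent_len_mono[OF run, of "Suc s" gj i j] gjc by (simp add: S'_def)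
          then show ?thesis using s by simp
        qed
        have B: "S' ! L = S ! L"
        proof (cases "k \<le> gj")
          case True
          then show ?thesis using prefix_nth[OF sent_mono[OF run True, of i j] Lt[unfolded S_def]]
            by (simp add: S_def S'_def)
        next
          case False
          then have "gj \<le> k" by simp
          then show ?thesis using prefix_nth[OF sent_mono[OF run \<open>gj \<le> k\<close>, of i j] A[unfolded S'_def]]
            by (simp add: S_def S'_def)
        qed
        show ?thesis unfolding proc_step_def
        proof (intro disjI2 exI[of _ j] conjI)
          show "length (recvd_from j (hist (r' m i))) < length (sent_to i (hist (r' m j)))"
            using A r'm r'mj by (simp add: L_def S'_def)
          show "r' (Suc m) i = ext (r' m i) (Recv j (sent_to i (hist (r' m j)) ! length (recvd_from j (hist (r' m i)))))"
            using B r'm r'mj r'Sm ev by (simp add: L_def S'_def)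
        qed
      qed
    qed
  qed
  have le: "loc_equiv r' r"
    unfolding loc_equiv_def
  proof
    fix i
    have ci: "c i \<le> T" using cT by blast
    show "range (\<lambda>m. r' m i) = range (\<lambda>m. r m i)"
    proof
      show "range (\<lambda>m. r' m i) \<subseteq> range (\<lambda>m. r m i)" unfolding r'_def by auto
      show "range (\<lambda>m. r m i) \<subseteq> range (\<lambda>m. r' m i)"
      proof
        fix s assume "s \<in> range (\<lambda>m. r m i)"
        then obtain k where "s = r k i" by blast
        moreover have "gsch T c i (esch T c i k) = k" by (rule g_e[of c i T, OF ci])
        ultimately have "s = r' (esch T c i k) i" by (simp add: r'_def)
        then show "s \<in> range (\<lambda>m. r' m i)" by blast
      qed
    qed
  qed
  have ops: "is_op r' (i, esch T c i t)"
     "op_completes r' (i, esch T c i t) \<longleftrightarrow> op_completes r (i, t)"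
     "op_completes r (i, t) \<Longrightarrow> op_end r' (i, esch T c i t) = esch T c i (op_end r (i, t))"
     "op_corresponds r (i, t) r' (i, esch T c i t)"
    if io: "is_op r (i, t)" for i t
    using op_transfer[OF cT r'eq io] by simp_all
  have endgt: "t < op_end r (i, t)" if co: "op_completes r (i, t)" for i t
  proof -
    obtain u where "t < u" "responds_in r i u" using co by (auto simp: op_completes_def)
    then show ?thesis unfolding op_end_def fst_conv snd_conv
      using LeastI[of "\<lambda>x. t < x \<and> responds_in r i x" u] by simp
  qed
  have ioX: "is_op r (x, tx)" using assms(2) Xe by simp
  have ioY: "is_op r (y, ty)" using assms(3) Ye by simp
  have ncx: "c x < tx"
  proof (rule nc)
    show "\<not> msg_chain r (x, tx) (y, T)" using assms(5) unfolding op_chain_def op_start_def Xe Ye T_def by simp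
    show "invoked_in r x tx" using ioX by (simp add: is_op_def)
  qed
  have eX: "esch T c x tx = T + tx" using ncx by (simp add: esch_def)
  have tx0: "0 < tx" using ioX by (auto simp: is_op_def invoked_in_def)
  have eY: "op_end r' (y, esch T c y ty) = T"
    using ops(3)[OF ioY] assms(4) cy unfolding Ye T_def by (simp add: esch_def)
  have bYX: "op_before r' (y, esch T c y ty) (x, esch T c x tx)"
    unfolding op_before_def using ops(1,2)[OF ioY] ops(1)[OF ioX] assms(4) eY eX tx0
    by (simp add: Ye op_start_def)
  have partZ: "\<exists>Z'. op_corresponds r Z r' Z' \<and> op_before r' (x, esch T c x tx) Z'"
    if Zc: "op_completes r Z" and XZ: "op_before r X Z" and nZ: "\<not> op_chain r Z Y" for Z
  proof -
    obtain z tz where Ze: "Z = (z, tz)" by (cases Z)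
    have ioZ: "is_op r (z, tz)" using Zc Ze by (simp add: op_completes_def)
    have ncz: "c z < tz"
    proof (rule nc)
      show "\<not> msg_chain r (z, tz) (y, T)" using nZ unfolding op_chain_def op_start_def Ze Ye T_def by simp
      show "invoked_in r z tz" using ioZ by (simp add: is_op_def)
    qed
    have eZ: "esch T c z tz = T + tz" using ncz by (simp add: esch_def)
    have coX: "op_completes r (x, tx)" using XZ Xe by (simp add: op_before_def)
    have lt: "op_end r (x, tx) < tz" using XZ Xe Ze by (simp add: op_before_def op_start_def)
    have "tx < op_end r (x, tx)" by (rule endgt[OF coX])
    then have eXe: "op_end r' (x, esch T c x tx) = T + op_end r (x, tx)"
      using ops(3)[OF ioX coX] ncx by (simp add: esch_def)
    have "op_before r' (x, esch T c x tx) (z, esch T c z tz)"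
      unfolding op_before_def using ops(1,2)[OF ioX] coX ops(1)[OF ioZ] eXe eZ lt
      by (simp add: op_start_def)
    then show ?thesis using ops(4)[OF ioZ] Ze by blast
  qed
  show ?thesis
  proof (intro exI conjI)
    show "is_run P r'" by (rule run')
    show "loc_equiv r' r" by (rule le)
    show "op_corresponds r X r' (x, esch T c x tx)" using ops(4)[OF ioX] Xe by simp
    show "op_corresponds r Y r' (y, esch T c y ty)" using ops(4)[OF ioY] Ye by simp
    show "op_before r' (y, esch T c y ty) (x, esch T c x tx)" by (rule bYX)
    show "\<forall>Z. op_completes r Z \<and> op_before r X Z \<and> \<not> op_chain r Z Y \<longrightarrow>
        (\<exists>Z'. op_corresponds r Z r' Z' \<and> op_before r' (x, esch T c x tx) Z')"
      using partZ by blast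
  qed
qed

end
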